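(* Let $Q$ be a connected conjunctive query without self-joins such that $Q$ contains no free sequence and the renamed query of $Q$ contains no nested clique. Then $Q$ has the head-domination property.
   Context: A conjunctive query (CQ) without self-joins is $Q(\mathbf{A}) :- R_1(\mathbb{A}_1), \ldots, R_m(\mathbb{A}_m)$ with pairwise distinct relation symbols, $\mathrm{attr}(R_i)=\mathbb{A}_i$, $\mathrm{attr}(Q)=\bigcup_i\mathbb{A}_i$, output attributes $\mathrm{head}(Q)=\mathbf{A}$, $\mathrm{head}(R_i)=\mathrm{head}(Q)\cap\mathrm{attr}(R_i)$. $Q$ is connected if the graph on its relations with edges between relations sharing an attribute is connected. A free sequence of $Q$ is a sequence of attributes $\langle A_1,\ldots,A_k\rangle$ with $A_1,A_k\in\mathrm{head}(Q)$, $A_2,\ldots,A_{k-1}\in\mathrm{attr}(Q)\setminus\mathrm{head}(Q)$, such that for every $i\in[k-1]$ some relation contains $A_i,A_{i+1}$, and no relation contains both $A_1$ and $A_k$. The graph $H_Q$ has the non-output attributes as vertices and an edge between two of them if some relation contains both; if $H_1,\ldots,H_k$ are its connected components, the renamed query $Q'$ has the same output attributes as $Q$, fresh attributes $F_1,\ldots,F_k$, and for each $R_i$ a relation $R_i'$ with $\mathrm{attr}(R_i')=\mathrm{head}(R_i)\cup\{F_j: H_j\cap\mathrm{attr}(R_i)\neq\emptyset\}$. In a CQ $Q''$, a nested clique is a set $P\subseteq\mathrm{attr}(Q'')$ such that each pair of attributes of $P$ occurs together in some relation; $P\cap\mathrm{head}(Q'')\neq\emptyset$ and $P\setminus\mathrm{head}(Q'')\neq\emptyset$;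 and no relation $R_j$ of $Q''$ satisfies $P\cap\mathrm{head}(Q'')\subseteq\mathrm{head}(R_j)$. $G^\exists_Q$ has as vertices the relations with $\mathrm{attr}(R_i)\setminus\mathrm{head}(Q)\neq\emptyset$ and an edge between $R_i,R_j$ if $(\mathrm{attr}(R_i)\cap\mathrm{attr}(R_j))\setminus\mathrm{head}(Q)\neq\emptyset$. A relation $R_i$ is dominant for a set $E$ of relations if $\bigcup_{R_j\in E}\mathrm{head}(R_j)\subseteq\mathrm{head}(R_i)$. $Q$ has the head-domination property if for every connected component $E$ of $G^\exists_Q$ some relation of $Q$ is dominant for $E$. *)

theory Defs
  imports Main
begin

text \<open>A conjunctive query without self-joins is given by a finite nonempty set Rs of
  (pairwise distinct) relation symbols, the attribute set att R of each relation,
  and the set H of output attributes.\<close>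

definition attrQ :: "'r set \<Rightarrow> ('r \<Rightarrow> 'a set) \<Rightarrow> 'a set" where
  "attrQ Rs att = (\<Union>R\<in>Rs. att R)"

definition is_cq :: "'r set \<Rightarrow> ('r \<Rightarrow> 'a set) \<Rightarrow> 'a set \<Rightarrow> bool" where
  "is_cq Rs att H \<longleftrightarrow> finite Rs \<and> Rs \<noteq> {} \<and> (\<forall>R\<in>Rs. finite (att R)) \<and> H \<subseteq> attrQ Rs att"

definition headR :: "('r \<Rightarrow> 'a set) \<Rightarrow> 'a set \<Rightarrow> 'r \<Rightarrow> 'a set" where
  "headR att H R = H \<inter> att R"

definition components :: "'v set \<Rightarrow> ('v \<Rightarrow> 'v \<Rightarrow> bool) \<Rightarrow> 'v set set" where
  "components V E =
     {{y \<in> V. (\<lambda>u w. u \<in> V \<and> w \<in> V \<and> E u w)\<^sup>*\<^sup>* x y} | x. x \<in> V}"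

definition graph_connected :: "'v set \<Rightarrow> ('v \<Rightarrow> 'v \<Rightarrow> bool) \<Rightarrow> bool" where
  "graph_connected V E \<longleftrightarrow>
     (\<forall>x\<in>V. \<forall>y\<in>V. (\<lambda>u w. u \<in> V \<and> w \<in> V \<and> E u w)\<^sup>*\<^sup>* x y)"

definition cq_connected :: "'r set \<Rightarrow> ('r \<Rightarrow> 'a set) \<Rightarrow> bool" where
  "cq_connected Rs att \<longleftrightarrow> graph_connected Rs (\<lambda>R S. att R \<inter> att S \<noteq> {})"

definition free_sequence :: "'r set \<Rightarrow> ('r \<Rightarrow> 'a set) \<Rightarrow> 'a set \<Rightarrow> 'a list \<Rightarrow> bool" where
  "free_sequence Rs att H as \<longleftrightarrow>
     as \<noteq> [] \<and> as ! 0 \<in> H \<and> last as \<in> H \<and>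
     (\<forall>i. 0 < i \<and> i < length as - 1 \<longrightarrow> as ! i \<in> attrQ Rs att - H) \<and>
     (\<forall>i. i < length as - 1 \<longrightarrow> (\<exists>R\<in>Rs. as ! i \<in> att R \<and> as ! Suc i \<in> att R)) \<and>
     \<not> (\<exists>R\<in>Rs. as ! 0 \<in> att R \<and> last as \<in> att R)"

definition HQ_components :: "'r set \<Rightarrow> ('r \<Rightarrow> 'a set) \<Rightarrow> 'a set \<Rightarrow> 'a set set" where
  "HQ_components Rs att H =
     components (attrQ Rs att - H) (\<lambda>A B. \<exists>R\<in>Rs. A \<in> att R \<and> B \<in> att R)"

text \<open>The renamed query Q': same relation symbols, output attributes Inl A for A in H,
  and one fresh attribute Inr C for every connected component C of H_Q.\<close>
definition renamed_att :: "'r set \<Rightarrow> ('r \<Rightarrow> 'a set) \<Rightarrow> 'a set \<Rightarrow> 'r \<Rightarrow> ('a + 'a set) set" where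
  "renamed_att Rs att H R =
     Inl ` headR att H R \<union> Inr ` {C \<in> HQ_components Rs att H. C \<inter> att R \<noteq> {}}"

definition renamed_head :: "'a set \<Rightarrow> ('a + 'a set) set" where
  "renamed_head H = Inl ` H"

definition nested_clique :: "'r set \<Rightarrow> ('r \<Rightarrow> 'b set) \<Rightarrow> 'b set \<Rightarrow> 'b set \<Rightarrow> bool" where
  "nested_clique Rs att H P \<longleftrightarrow>
     P \<subseteq> attrQ Rs att \<and>
     (\<forall>x\<in>P. \<forall>y\<in>P. \<exists>R\<in>Rs. x \<in> att R \<and> y \<in> att R) \<and>
     P \<inter> H \<noteq> {} \<and> P - H \<noteq> {} \<and>
     \<not> (\<exists>R\<in>Rs. P \<inter> H \<subseteq> headR att H R)"

definition G_exists_components :: "'r set \<Rightarrow> ('r \<Rightarrow> 'a set) \<Rightarrow> 'a set \<Rightarrow> 'r set set" where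
  "G_exists_components Rs att H =
     components {R \<in> Rs. att R - H \<noteq> {}} (\<lambda>R S. (att R \<inter> att S) - H \<noteq> {})"

definition dominant :: "('r \<Rightarrow> 'a set) \<Rightarrow> 'a set \<Rightarrow> 'r \<Rightarrow> 'r set \<Rightarrow> bool" where
  "dominant att H R E \<longleftrightarrow> (\<Union>S\<in>E. headR att H S) \<subseteq> headR att H R"

definition head_domination :: "'r set \<Rightarrow> ('r \<Rightarrow> 'a set) \<Rightarrow> 'a set \<Rightarrow> bool" where
  "head_domination Rs att H \<longleftrightarrow>
     (\<forall>E\<in>G_exists_components Rs att H. \<exists>R\<in>Rs. dominant att H R E)"

end

theory Submission
  imports Defs
begin

definition walk :: "('a \<Rightarrow> 'a \<Rightarrow> bool) \<Rightarrow> 'a list \<Rightarrow> bool" where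
  "walk co as \<longleftrightarrow> (\<forall>i. i < length as - 1 \<longrightarrow> co (as ! i) (as ! Suc i))"

lemma walk_single: "walk co [a]" by (simp add: walk_def)

lemma walk_snoc: assumes "walk co as" "as \<noteq> []" "co (last as) b" shows "walk co (as @ [b])"
  unfolding walk_def
proof (intro allI impI)
  fix i assume i: "i < length (as @ [b]) - 1"
  show "co ((as @ [b]) ! i) ((as @ [b]) ! Suc i)"
  proof (cases "Suc i < length as")
    case True then show ?thesis using assms(1) by (simp add: walk_def nth_append)
  next
    case False
    then have "i = length as - 1" using i by simp
    then show ?thesis using assms(2,3) False by (simp add: nth_append last_conv_nth)
  qed
qed

lemma walk_cons: assumes "walk co as" "as \<noteq> []" "co a (hd as)" shows "walk co (a # as)"
  unfolding walk_def
proof (intro allI impI)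
  fix i assume i: "i < length (a # as) - 1"
  show "co ((a # as) ! i) ((a # as) ! Suc i)"
  proof (cases i)
    case 0 then show ?thesis using assms(2,3) by (simp add: hd_conv_nth)
  next
    case (Suc j) then show ?thesis using assms(1) i by (simp add: walk_def)
  qed
qed

lemma rtc_walk:
  assumes "r\<^sup>*\<^sup>* a b"
  shows "\<exists>ws. ws \<noteq> [] \<and> hd ws = a \<and> last ws = b \<and> set ws \<subseteq> insert a {w. \<exists>u. r u w} \<and> walk r ws"
  using assms
proof (induction rule: rtranclp_induct)
  case base then show ?case by (intro exI[of _ "[a]"]) (simp add: walk_single)
next
  case (step u w)
  then obtain ws where ws: "ws \<noteq> []" "hd ws = a" "last ws = u" "set ws \<subseteq> insert a {w. \<exists>u. r u w}" "walk r ws" by blast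
  show ?case using ws step(2) by (intro exI[of _ "ws @ [w]"]) (auto simp: walk_snoc)
qed

lemma rtc_sym:
  assumes "r\<^sup>*\<^sup>* a b" "\<And>x y. r x y \<Longrightarrow> r y x"
  shows "r\<^sup>*\<^sup>* b a"
  using assms(1)
proof (induction rule: rtranclp_induct)
  case base then show ?case by simp
next
  case (step u w)
  then show ?case using assms(2) by (meson converse_rtranclp_into_rtranclp)
qed


lemma walk_mono: assumes "walk r ws" "\<And>u w. r u w \<Longrightarrow> q u w" shows "walk q ws"
  using assms by (simp add: walk_def)

theorem lemma29:
  fixes Rs :: "'r set" and att :: "'r \<Rightarrow> 'a set" and H :: "'a set"
  assumes "is_cq Rs att H"
    and "cq_connected Rs att"
    and "\<not> (\<exists>as. free_sequence Rs att H as)"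
    and "\<not> (\<exists>P. nested_clique Rs (renamed_att Rs att H) (renamed_head H) P)"
  shows "head_domination Rs att H"
  unfolding head_domination_def
proof
  fix E assume "E \<in> G_exists_components Rs att H"
  define V where "V = {R \<in> Rs. att R - H \<noteq> {}}"
  define rV where "rV = (\<lambda>u w. u \<in> V \<and> w \<in> V \<and> (att u \<inter> att w) - H \<noteq> {})"
  obtain R0 where R0: "R0 \<in> V" and E: "E = {S \<in> V. rV\<^sup>*\<^sup>* R0 S}"
    using \<open>E \<in> G_exists_components Rs att H\<close>
    unfolding G_exists_components_def components_def V_def rV_def by blast
  define V' where "V' = attrQ Rs att - H"
  define hq where "hq = (\<lambda>u w. u \<in> V' \<and> w \<in> V' \<and> (\<exists>R\<in>Rs. u \<in> att R \<and> w \<in> att R))"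
  have hqsym: "\<And>u w. hq u w \<Longrightarrow> hq w u" unfolding hq_def by blast
  obtain a0 where a0: "a0 \<in> att R0" "a0 \<notin> H" using R0 unfolding V_def by blast
  have R0Rs: "R0 \<in> Rs" using R0 unfolding V_def by blast
  have a0V': "a0 \<in> V'" using a0 R0Rs unfolding V'_def attrQ_def by blast
  have claim1: "\<forall>b\<in>att S - H. hq\<^sup>*\<^sup>* a0 b" if "rV\<^sup>*\<^sup>* R0 S" for S
    using that
  proof (induction rule: rtranclp_induct)
    case base
    show ?case
    proof
      fix b assume "b \<in> att R0 - H"
      then have "hq a0 b" using a0 a0V' R0Rs unfolding hq_def V'_def attrQ_def by blast
      then show "hq\<^sup>*\<^sup>* a0 b" by blast
    qed
  next
    case (step S T)
    then obtain c where c: "c \<in> att S" "c \<in> att T" "c \<notin> H" unfolding rV_def by blast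
    have TRs: "T \<in> Rs" using step(2) unfolding rV_def V_def by blast
    have "hq\<^sup>*\<^sup>* a0 c" using step(3) c by blast
    show ?case
    proof
      fix b assume "b \<in> att T - H"
      then have "hq c b" using c TRs unfolding hq_def V'_def attrQ_def by blast
      then show "hq\<^sup>*\<^sup>* a0 b" using \<open>hq\<^sup>*\<^sup>* a0 c\<close> by (meson rtranclp.rtrancl_into_rtrancl)
    qed
  qed
  define X where "X = (\<Union>S\<in>E. headR att H S)"
  show "\<exists>R\<in>Rs. dominant att H R E"
  proof (cases "X = {}")
    case True
    then show ?thesis using R0Rs unfolding dominant_def X_def by blast
  next
    case False
    have XH: "X \<subseteq> H" unfolding X_def headR_def by blast
    have claim2: "\<exists>R\<in>Rs. x \<in> att R \<and> y \<in> att R" if xX: "x \<in> X" and yX: "y \<in> X" for x y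
    proof -
      obtain S1 where S1: "S1 \<in> E" "x \<in> H" "x \<in> att S1" using xX unfolding X_def headR_def by blast
      obtain S2 where S2: "S2 \<in> E" "y \<in> H" "y \<in> att S2" using yX unfolding X_def headR_def by blast
      obtain b1 where b1: "b1 \<in> att S1" "b1 \<notin> H" using S1 unfolding E V_def by blast
      obtain b2 where b2: "b2 \<in> att S2" "b2 \<notin> H" using S2 unfolding E V_def by blast
      have S1Rs: "S1 \<in> Rs" and S2Rs: "S2 \<in> Rs" using S1 S2 unfolding E V_def by auto
      have "hq\<^sup>*\<^sup>* a0 b1" using claim1 S1 b1 unfolding E by blast
      then have "hq\<^sup>*\<^sup>* b1 a0" using rtc_sym hqsym by metis
      moreover have "hq\<^sup>*\<^sup>* a0 b2" using claim1 S2 b2 unfolding E by blast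
      ultimately have "hq\<^sup>*\<^sup>* b1 b2" by simp
      then obtain ws where ws: "ws \<noteq> []" "hd ws = b1" "last ws = b2"
        "set ws \<subseteq> insert b1 {w. \<exists>u. hq u w}" "walk hq ws"
        using rtc_walk by metis
      have b1V': "b1 \<in> V'" using b1 S1Rs unfolding V'_def attrQ_def by blast
      have wsV: "set ws \<subseteq> V'" using ws(4) b1V' unfolding hq_def by blast
      show ?thesis
      proof (rule ccontr)
        assume nxy: "\<not> (\<exists>R\<in>Rs. x \<in> att R \<and> y \<in> att R)"
        define co where "co = (\<lambda>u w. \<exists>R\<in>Rs. u \<in> att R \<and> w \<in> att R)"
        have "walk co ws" using ws(5) by (rule walk_mono) (auto simp: hq_def co_def)
        then have "walk co (x # ws)" using ws S1 S1Rs b1 by (intro walk_cons) (auto simp: co_def)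
        then have wk: "walk co ((x # ws) @ [y])" using ws S2 S2Rs b2 by (intro walk_snoc) (auto simp: co_def)
        have "free_sequence Rs att H (x # ws @ [y])"
          unfolding free_sequence_def
        proof (intro conjI allI impI)
          show "\<And>i. 0 < i \<and> i < length (x # ws @ [y]) - 1 \<Longrightarrow> (x # ws @ [y]) ! i \<in> attrQ Rs att - H"
          proof -
            fix i assume i: "0 < i \<and> i < length (x # ws @ [y]) - 1"
            then obtain j where j: "i = Suc j" "j < length ws" by (cases i) auto
            then have "(x # ws @ [y]) ! i = ws ! j" by (simp add: nth_append)
            then show "(x # ws @ [y]) ! i \<in> attrQ Rs att - H" using j wsV nth_mem unfolding V'_def by fastforce
          qed
          show "\<And>i. i < length (x # ws @ [y]) - 1 \<Longrightarrow> \<exists>R\<in>Rs. (x # ws @ [y]) ! i \<in> att R \<and> (x # ws @ [y]) ! Suc i \<in> att R"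
            using wk unfolding walk_def co_def by simp
        qed (use S1 S2 nxy in auto)
        then show False using assms(3) by blast
      qed
    qed
    define C where "C = {y \<in> V'. hq\<^sup>*\<^sup>* a0 y}"
    have CHQ: "C \<in> HQ_components Rs att H"
      unfolding HQ_components_def components_def C_def V'_def hq_def
      using a0V' unfolding V'_def by blast
    have CS: "C \<inter> att S \<noteq> {}" if "S \<in> E" for S
    proof -
      obtain b where b: "b \<in> att S" "b \<notin> H" using \<open>S \<in> E\<close> unfolding E V_def by blast
      have "S \<in> Rs" using that unfolding E V_def by blast
      then have "b \<in> V'" using b unfolding V'_def attrQ_def by blast
      moreover have "hq\<^sup>*\<^sup>* a0 b" using claim1 that b unfolding E by blast
      ultimately show ?thesis using b unfolding C_def by blast
    qed
    define P where "P = Inl ` X \<union> {Inr C}"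
    define att' where "att' = renamed_att Rs att H"
    have Einc: "E \<subseteq> Rs" unfolding E V_def by blast
    have inS: "Inr C \<in> att' S" if "S \<in> E" for S
      using CS[OF that] CHQ unfolding att'_def renamed_att_def by blast
    have inX: "\<exists>S\<in>E. Inl x \<in> att' S \<and> Inr C \<in> att' S" if xX: "x \<in> X" for x
    proof -
      obtain S where S: "S \<in> E" "x \<in> headR att H S" using xX unfolding X_def by blast
      then have "Inl x \<in> att' S" unfolding att'_def renamed_att_def by simp
      then show ?thesis using S inS by blast
    qed
    have "\<not> nested_clique Rs (renamed_att Rs att H) (renamed_head H) P" using assms(4) by simp
    then have "\<not> nested_clique Rs att' (renamed_head H) P" unfolding att'_def .
    moreover have "P \<subseteq> attrQ Rs att'"
    proof
      fix p assume "p \<in> P"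
      have R0E: "R0 \<in> E" using R0 unfolding E by blast
      show "p \<in> attrQ Rs att'"
      proof (cases "p = Inr C")
        case True
        then show ?thesis using inS[OF R0E] R0E Einc unfolding attrQ_def by blast
      next
        case False
        then obtain x where "p = Inl x" "x \<in> X" using \<open>p \<in> P\<close> unfolding P_def by blast
        then show ?thesis using inX Einc unfolding attrQ_def by blast
      qed
    qed
    moreover have "\<forall>p\<in>P. \<forall>q\<in>P. \<exists>R\<in>Rs. p \<in> att' R \<and> q \<in> att' R"
    proof (intro ballI)
      fix p q assume "p \<in> P" "q \<in> P"
      show "\<exists>R\<in>Rs. p \<in> att' R \<and> q \<in> att' R"
      proof (cases "p = Inr C")
        case pC: True
        show ?thesis
        proof (cases "q = Inr C")
          case True
          have "R0 \<in> E" using R0 unfolding E by blast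
          then show ?thesis using pC True inS Einc by blast
        next
          case False
          then obtain y where "q = Inl y" "y \<in> X" using \<open>q \<in> P\<close> unfolding P_def by blast
          then show ?thesis using pC inX Einc by blast
        qed
      next
        case pF: False
        then obtain x where x: "p = Inl x" "x \<in> X" using \<open>p \<in> P\<close> unfolding P_def by blast
        show ?thesis
        proof (cases "q = Inr C")
          case True
          then show ?thesis using x inX Einc by blast
        next
          case False
          then obtain y where y: "q = Inl y" "y \<in> X" using \<open>q \<in> P\<close> unfolding P_def by blast
          obtain R where "R \<in> Rs" "x \<in> att R" "y \<in> att R" using claim2 x y by blast
          then show ?thesis using x y XH unfolding att'_def renamed_att_def headR_def by blast
        qed
      qed
    qed
    moreover have "P \<inter> renamed_head H \<noteq> {}" using False XH unfolding P_def renamed_head_def by blast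
    moreover have "P - renamed_head H \<noteq> {}" unfolding P_def renamed_head_def by blast
    ultimately obtain R where R: "R \<in> Rs" "P \<inter> renamed_head H \<subseteq> headR att' (renamed_head H) R"
      unfolding nested_clique_def by blast
    have "X \<subseteq> headR att H R"
    proof
      fix x assume "x \<in> X"
      then have "Inl x \<in> P \<inter> renamed_head H" using XH unfolding P_def renamed_head_def by blast
      then have "Inl x \<in> att' R" using R(2) unfolding headR_def by blast
      then show "x \<in> headR att H R" using \<open>x \<in> X\<close> XH unfolding att'_def renamed_att_def headR_def by blast
    qed
    then show ?thesis using R(1) unfolding dominant_def X_def by blast
  qed
qed

end
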